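(* Let $K\subseteq\mathbb{R}^d$ be a convex body containing the origin, let $\Lambda\subseteq\mathbb{R}^d$ be a lattice, let $V\subseteq\mathbb{R}^d$ be a rational linear subspace with $\dim V=\ell$, and let $i\in\{1,\dots,d\}$. Let $\pi_V$ denote the orthogonal projection of $\mathbb{R}^d$ onto $V$ and $V^\perp$ the orthogonal complement of $V$. Then $$\mu_i(K,\Lambda)\leqslant \max_{\substack{0\le j\le \ell\\ 0\le i-j\le d-\ell}} \Big(\mu_j(\pi_V(K),\pi_V(\Lambda))+\mu_{i-j}(K\cap V^\perp,\Lambda\cap V^\perp)\Big).$$
   Context: A convex body is a full-dimensional compact convex set; a lattice is a full-rank discrete subgroup. A linear subspace $V$ is rational (with respect to $\Lambda$) if it is spanned by vectors of $\Lambda$; then $\pi_V(\Lambda)$ is a lattice in $V$ and $\Lambda\cap V^\perp$ is a lattice in $V^\perp$. For a $k$-dimensional real vector space $W$, a lattice $\Gamma\subseteq W$, a compact convex set $C\subseteq W$ and $i\in\{1,\dots,k\}$, the $i$-th covering minimum is $\mu_i(C,\Gamma)=\min\{\mu\ge 0: (\mu C+\Gamma)\cap U\neq\emptyset \text{ for every affine subspace } U\subseteq W \text{ of dimension } k-i\}$; by convention $\mu_0(C,\Gamma)=0$. The covering minima of $\pi_V(K)$ and $\pi_V(\Lambda)$ are taken inside $V$, and those of $K\cap V^\perp$ and $\Lambda\cap V^\perp$ inside $V^\perp$. *)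

theory Defs
  imports "HOL-Analysis.Analysis" "HOL-Library.Extended_Real"
begin

definition convex_body :: "'a::euclidean_space set \<Rightarrow> bool" where
  "convex_body K \<longleftrightarrow> compact K \<and> convex K \<and> interior K \<noteq> {}"

definition lattice_in :: "'a::euclidean_space set \<Rightarrow> 'a set \<Rightarrow> bool" where
  "lattice_in W L \<longleftrightarrow> L \<subseteq> W \<and> 0 \<in> L \<and> (\<forall>x\<in>L. \<forall>y\<in>L. x - y \<in> L)
     \<and> (\<exists>e>0. \<forall>x\<in>L. x \<noteq> 0 \<longrightarrow> e \<le> norm x) \<and> span L = W"

definition lattice :: "'a::euclidean_space set \<Rightarrow> bool" where
  "lattice L \<longleftrightarrow> lattice_in UNIV L"

definition rational_subspace :: "'a::euclidean_space set \<Rightarrow> 'a set \<Rightarrow> bool" where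
  "rational_subspace L V \<longleftrightarrow> subspace V \<and> (\<exists>S\<subseteq>L. span S = V)"

definition orth_proj :: "'a::euclidean_space set \<Rightarrow> 'a \<Rightarrow> 'a" where
  "orth_proj V x = (THE y. y \<in> V \<and> (\<forall>v\<in>V. inner (x - y) v = 0))"

text \<open>Value in extended reals; the infimum of
  the empty set is \<infinity>.\<close>
definition covering_minimum :: "'a::euclidean_space set \<Rightarrow> 'a set \<Rightarrow> 'a set \<Rightarrow> nat \<Rightarrow> ereal" where
  "covering_minimum W C \<Gamma> i =
     (if i = 0 then 0 else
      Inf {ereal \<mu> | \<mu>. \<mu> \<ge> 0 \<and>
            (\<forall>U. affine U \<and> U \<noteq> {} \<and> U \<subseteq> W \<and> aff_dim U = int (dim W) - int i \<longrightarrow>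
                 {\<mu> *\<^sub>R c + g | c g. c \<in> C \<and> g \<in> \<Gamma>} \<inter> U \<noteq> {})})"

end

theory Submission
  imports Defs
begin

lemma span_sub: "subspace V \<Longrightarrow> span V = V"
  by (simp add: span_eq_iff)

lemma op_char:
  assumes "subspace V" "y \<in> V" "x - y \<in> orthogonal_comp V"
  shows "orth_proj V x = y"
  unfolding orth_proj_def
proof (rule the_equality)
  show "y \<in> V \<and> (\<forall>v\<in>V. inner (x - y) v = 0)"
    using assms(2,3) by (auto simp: orthogonal_comp_def orthogonal_def inner_commute)
  fix y' assume h: "y' \<in> V \<and> (\<forall>v\<in>V. inner (x - y') v = 0)"
  have d: "y - y' \<in> V" using assms h subspace_diff by blast
  have "inner (x - y') (y - y') = 0" using h d by blast
  moreover have "inner (x - y) (y - y') = 0"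
    using assms(3) d by (auto simp: orthogonal_comp_def orthogonal_def inner_commute)
  ultimately have "inner ((x - y') - (x - y)) (y - y') = 0" by (simp add: inner_diff_left)
  then have "inner (y - y') (y - y') = 0" by simp
  then show "y' = y" by simp
qed

lemma op_ex:
  assumes "subspace V"
  shows "orth_proj V x \<in> V \<and> x - orth_proj V x \<in> orthogonal_comp V"
proof -
  obtain y z where yz: "y \<in> span V" "\<And>w. w \<in> span V \<Longrightarrow> orthogonal z w" "x = y + z"
    using orthogonal_subspace_decomp_exists[of V x] by blast
  have "y \<in> V" using yz(1) assms by (simp add: span_sub)
  moreover have "x - y \<in> orthogonal_comp V"
    using yz assms by (auto simp: orthogonal_comp_def orthogonal_commute span_sub)
  ultimately show ?thesis using op_char[OF assms] by simp
qed

lemma op_linear: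
  assumes "subspace V"
  shows "linear (orth_proj V)"
proof (rule linearI)
  have sc: "subspace (orthogonal_comp V)" by (rule subspace_orthogonal_comp)
  fix x y :: 'a
  show "orth_proj V (x + y) = orth_proj V x + orth_proj V y"
  proof (rule op_char[OF assms])
    show "orth_proj V x + orth_proj V y \<in> V" using op_ex[OF assms] assms subspace_add by blast
    have "(x - orth_proj V x) + (y - orth_proj V y) \<in> orthogonal_comp V"
      using op_ex[OF assms] sc subspace_add by blast
    then show "x + y - (orth_proj V x + orth_proj V y) \<in> orthogonal_comp V"
      by (simp add: algebra_simps)
  qed
next
  have sc: "subspace (orthogonal_comp V)" by (rule subspace_orthogonal_comp)
  fix c :: real and x :: 'a
  show "orth_proj V (c *\<^sub>R x) = c *\<^sub>R orth_proj V x"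
  proof (rule op_char[OF assms])
    show "c *\<^sub>R orth_proj V x \<in> V" using op_ex[OF assms] assms subspace_scale by blast
    have "c *\<^sub>R (x - orth_proj V x) \<in> orthogonal_comp V"
      using op_ex[OF assms] sc subspace_scale by blast
    then show "c *\<^sub>R x - c *\<^sub>R orth_proj V x \<in> orthogonal_comp V"
      by (simp add: algebra_simps)
  qed
qed

lemma op_zero_iff:
  assumes "subspace V"
  shows "orth_proj V x = 0 \<longleftrightarrow> x \<in> orthogonal_comp V"
proof
  assume "orth_proj V x = 0" then show "x \<in> orthogonal_comp V" using op_ex[OF assms, of x] by simp
next
  assume "x \<in> orthogonal_comp V" then show "orth_proj V x = 0"
    using op_char[OF assms, of 0 x] assms subspace_0 by auto
qed

lemma dim_orth_comp:
  fixes V :: "'a::euclidean_space set"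
  assumes "subspace V"
  shows "dim (orthogonal_comp V) + dim V = DIM('a)"
proof -
  have "orthogonal_comp V = {y \<in> UNIV. \<forall>x\<in>V. orthogonal x y}"
    by (auto simp: orthogonal_comp_def)
  then show ?thesis using dim_subspace_orthogonal_to_vectors[OF assms subspace_UNIV] by simp
qed

lemma rank_proj:
  fixes V L :: "'a::euclidean_space set"
  assumes V: "subspace V" and L: "subspace L"
  shows "dim L = dim (orth_proj V ` L) + dim (L \<inter> orthogonal_comp V)"
proof -
  define P where "P = orth_proj V"
  define N where "N = L \<inter> orthogonal_comp V"
  define Mc where "Mc = {y \<in> L. \<forall>x\<in>N. orthogonal x y}"
  have lin: "linear P" unfolding P_def by (rule op_linear[OF V])
  have sN: "subspace N" unfolding N_def by (simp add: L subspace_inter subspace_orthogonal_comp)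
  have d1: "dim Mc + dim N = dim L"
    unfolding Mc_def by (rule dim_subspace_orthogonal_to_vectors[OF sN L]) (auto simp: N_def)
  have McL: "Mc = L \<inter> orthogonal_comp N"
    by (auto simp: Mc_def orthogonal_comp_def)
  have sM: "subspace Mc" unfolding McL by (simp add: L subspace_inter subspace_orthogonal_comp)
  have img: "P ` Mc = P ` L"
  proof
    show "P ` Mc \<subseteq> P ` L" by (auto simp: Mc_def)
    show "P ` L \<subseteq> P ` Mc"
    proof
      fix p assume "p \<in> P ` L"
      then obtain x where x: "x \<in> L" "p = P x" by auto
      obtain y z where yz: "y \<in> span N" "\<And>w. w \<in> span N \<Longrightarrow> orthogonal z w" "x = y + z"
        using orthogonal_subspace_decomp_exists[of N x] by blast
      have yN: "y \<in> N" using yz(1) sN by (simp add: span_sub)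
      have "z = x - y" using yz by simp
      then have zL: "z \<in> L" using x yN L by (simp add: N_def subspace_diff)
      have zM: "z \<in> Mc" using zL yz(2) sN by (auto simp: Mc_def orthogonal_commute span_sub)
      have "P y = 0" using yN op_zero_iff[OF V] by (simp add: N_def P_def)
      then have "P x = P z" using yz(3) lin by (simp add: linear_add)
      then show "p \<in> P ` Mc" using x zM by auto
    qed
  qed
  have inj: "inj_on P (span Mc)"
  proof -
    have "inj_on P Mc"
    proof (subst linear_inj_on_iff_eq_0[OF lin sM], intro ballI impI)
      fix m assume m: "m \<in> Mc" "P m = 0"
      then have "m \<in> N" using op_zero_iff[OF V] by (auto simp: N_def P_def Mc_def)
      then have "orthogonal m m" using m by (auto simp: Mc_def)
      then show "m = 0" by (simp add: orthogonal_self)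
    qed
    then show ?thesis using sM by (simp add: span_sub)
  qed
  have "dim (P ` Mc) = dim Mc" by (rule dim_image_eq[OF lin inj])
  then show ?thesis using d1 img by (simp add: P_def N_def)
qed

lemma cm_nonneg: "covering_minimum W C \<Gamma> i \<ge> 0"
  unfolding covering_minimum_def by (auto intro: Inf_greatest)

lemma affine_diff_indep:
  assumes "affine U" "u \<in> U" "u' \<in> U"
  shows "(\<lambda>x. x - u) ` U = (\<lambda>x. x - u') ` U"
proof -
  have *: "(\<lambda>x. x - a) ` U \<subseteq> (\<lambda>x. x - b) ` U" if "a \<in> U" "b \<in> U" for a b
  proof
    fix y assume "y \<in> (\<lambda>x. x - a) ` U"
    then obtain x where x: "x \<in> U" "y = x - a" by auto
    have "x + 1 *\<^sub>R (b - a) \<in> U" using mem_affine_3_minus[OF assms(1) x(1) that(2) that(1)] .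
    moreover have "y = (x + 1 *\<^sub>R (b - a)) - b" using x by simp
    ultimately show "y \<in> (\<lambda>x. x - b) ` U" by blast
  qed
  show ?thesis using *[OF assms(2,3)] *[OF assms(3,2)] by blast
qed

lemma full_affine_eq:
  fixes U W :: "'a::euclidean_space set"
  assumes W: "subspace W" and U: "affine U" "U \<noteq> {}" "U \<subseteq> W" "aff_dim U = int (dim W)"
  shows "U = W"
proof -
  obtain u where u: "u \<in> U" using U by auto
  define S where "S = (\<lambda>x. x - u) ` U"
  have sS: "subspace S" unfolding S_def by (rule affine_diffs_subspace_subtract[OF U(1) u])
  have "aff_dim U = int (dim S)" unfolding S_def
    by (rule aff_dim_eq_dim_subtract) (simp add: u hull_inc)
  then have dS: "dim S = dim W" using U by simp
  have uW: "u \<in> W" using u U by auto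
  have SW: "S \<subseteq> W" using U uW W by (auto simp: S_def subspace_diff)
  have "S = W" using subspace_dim_equal[OF sS W SW] dS by simp
  show ?thesis
  proof
    show "W \<subseteq> U"
    proof
      fix w assume "w \<in> W"
      then have "w - u \<in> S" using \<open>S = W\<close> uW W subspace_diff by blast
      then obtain x where "x \<in> U" "w - u = x - u" by (auto simp: S_def)
      then show "w \<in> U" by simp
    qed
  qed (use U in auto)
qed

lemma star_scale:
  assumes "convex C" "0 \<in> C" "c \<in> C" "0 \<le> s" "s \<le> \<mu>" "0 < \<mu>"
  shows "(s / \<mu>) *\<^sub>R c \<in> C"
proof -
  have "(1 - s/\<mu>) *\<^sub>R 0 + (s / \<mu>) *\<^sub>R c \<in> C"
    by (rule convexD[OF assms(1,2,3)]) (use assms in auto)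
  then show ?thesis by simp
qed

lemma cm_use:
  fixes W C \<Gamma> U :: "'a::euclidean_space set"
  assumes W: "subspace W" and C: "convex C" "0 \<in> C" and G: "0 \<in> \<Gamma>"
    and lt: "covering_minimum W C \<Gamma> i < ereal \<mu>"
    and U: "affine U" "U \<noteq> {}" "U \<subseteq> W" "aff_dim U = int (dim W) - int i"
  shows "\<exists>c\<in>C. \<exists>g\<in>\<Gamma>. \<mu> *\<^sub>R c + g \<in> U"
proof (cases "i = 0")
  case True
  then have "U = W" using full_affine_eq[OF W U(1,2,3)] U(4) by simp
  then show ?thesis using C G W subspace_0 by fastforce
next
  case False
  define S where "S = {ereal \<mu> | \<mu>. \<mu> \<ge> 0 \<and>
            (\<forall>U. affine U \<and> U \<noteq> {} \<and> U \<subseteq> W \<and> aff_dim U = int (dim W) - int i \<longrightarrow>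
                 {\<mu> *\<^sub>R c + g | c g. c \<in> C \<and> g \<in> \<Gamma>} \<inter> U \<noteq> {})}"
  have "Inf S < ereal \<mu>" using lt False unfolding covering_minimum_def S_def by simp
  then obtain s where s: "s \<in> S" "s < ereal \<mu>" unfolding Inf_less_iff by blast
  then obtain m where m: "s = ereal m" "m \<ge> 0"
    "\<forall>U. affine U \<and> U \<noteq> {} \<and> U \<subseteq> W \<and> aff_dim U = int (dim W) - int i \<longrightarrow>
                 {m *\<^sub>R c + g | c g. c \<in> C \<and> g \<in> \<Gamma>} \<inter> U \<noteq> {}"
    unfolding S_def by blast
  have mm: "m < \<mu>" using s(2) m(1) by simp
  have "{m *\<^sub>R c + g | c g. c \<in> C \<and> g \<in> \<Gamma>} \<inter> U \<noteq> {}" using m(3) U by blast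
  then obtain c g where cg: "c \<in> C" "g \<in> \<Gamma>" "m *\<^sub>R c + g \<in> U" by blast
  have c': "(m / \<mu>) *\<^sub>R c \<in> C" using star_scale[OF C cg(1) m(2)] mm m(2) by simp
  have eq: "\<mu> *\<^sub>R ((m / \<mu>) *\<^sub>R c) = m *\<^sub>R c" using mm m(2) by simp
  have "\<mu> *\<^sub>R ((m / \<mu>) *\<^sub>R c) + g \<in> U" unfolding eq by (rule cg(3))
  then show ?thesis using c' cg(2) by blast
qed

theorem theorem1p1:
  fixes K \<Lambda> V :: "'a::euclidean_space set" and i l :: nat
  assumes "convex_body K" and "0 \<in> K"
    and "lattice \<Lambda>"
    and "rational_subspace \<Lambda> V" and "dim V = l"
    and "1 \<le> i" and "i \<le> DIM('a)"
  shows "covering_minimum UNIV K \<Lambda> i \<le>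
    Max ((\<lambda>j. covering_minimum V (orth_proj V ` K) (orth_proj V ` \<Lambda>) j
              + covering_minimum (orthogonal_comp V) (K \<inter> orthogonal_comp V)
                  (\<Lambda> \<inter> orthogonal_comp V) (i - j))
         ` {j. j \<le> l \<and> j \<le> i \<and> i - j \<le> DIM('a) - l})"
proof -
  define d where "d = DIM('a)"
  define P where "P = orth_proj V"
  define Vp where "Vp = orthogonal_comp V"
  define T where "T = {j. j \<le> l \<and> j \<le> i \<and> i - j \<le> DIM('a) - l}"
  define f where "f = (\<lambda>j. covering_minimum V (orth_proj V ` K) (orth_proj V ` \<Lambda>) j
              + covering_minimum (orthogonal_comp V) (K \<inter> orthogonal_comp V)
                  (\<Lambda> \<inter> orthogonal_comp V) (i - j))"
  define M where "M = Max (f ` T)"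
  have V: "subspace V" using assms(4) by (simp add: rational_subspace_def)
  have sVp: "subspace Vp" unfolding Vp_def by (rule subspace_orthogonal_comp)
  have linP: "linear P" unfolding P_def by (rule op_linear[OF V])
  have Lat: "0 \<in> \<Lambda>" "\<And>x y. x \<in> \<Lambda> \<Longrightarrow> y \<in> \<Lambda> \<Longrightarrow> x - y \<in> \<Lambda>"
    using assms(3) by (auto simp: lattice_def lattice_in_def)
  have Ladd: "x + y \<in> \<Lambda>" if "x \<in> \<Lambda>" "y \<in> \<Lambda>" for x y
  proof -
    have "0 - y \<in> \<Lambda>" using Lat that by blast
    then have "x - (0 - y) \<in> \<Lambda>" using Lat that by blast
    then show ?thesis by simp
  qed
  have cK: "convex K" using assms(1) by (simp add: convex_body_def)
  have dimVp: "dim Vp + l = d" using dim_orth_comp[OF V] assms(5) by (simp add: Vp_def d_def)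
  have finT: "finite T" unfolding T_def by (rule finite_subset[of _ "{..l}"]) auto
  have fle: "f j \<le> M" if "j \<in> T" for j
    unfolding M_def using finT that by (simp add: Max_ge)
  have j0: "min i l \<in> T" using assms(7) by (auto simp: T_def)
  have fnn: "0 \<le> f j" for j unfolding f_def by (simp add: cm_nonneg add_nonneg_nonneg)
  have Mnn: "0 \<le> M" using fle[OF j0] fnn[of "min i l"] by simp
  have goal: "covering_minimum UNIV K \<Lambda> i \<le> M"
  proof (cases "M = \<infinity>")
    case True then show ?thesis by simp
  next
    case False
    then obtain m where Mm: "M = ereal m" using Mnn by (cases M) auto
    have m0: "0 \<le> m" using Mnn Mm by simp
    show ?thesis
    proof (rule ereal_le_epsilon2)
      fix e :: real assume e: "0 < e"
      have key: "{(m + e) *\<^sub>R c + g | c g. c \<in> K \<and> g \<in> \<Lambda>} \<inter> U \<noteq> {}"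
        if U: "affine U" "U \<noteq> {}" "aff_dim U = int d - int i" for U
      proof -
        obtain u where u: "u \<in> U" using U by auto
        define L where "L = (\<lambda>x. x - u) ` U"
        have sL: "subspace L" unfolding L_def by (rule affine_diffs_subspace_subtract[OF U(1) u])
        have "aff_dim U = int (dim L)" unfolding L_def
          by (rule aff_dim_eq_dim_subtract) (simp add: u hull_inc)
        then have dL: "dim L + i = d" using U(3) assms(7) by (simp add: d_def)
        define N where "N = L \<inter> Vp"
        define t where "t = dim N"
        define r where "r = dim (P ` L)"
        have rt: "dim L = r + t" unfolding r_def t_def N_def P_def Vp_def by (rule rank_proj[OF V sL])
        have "P ` L \<subseteq> V" using op_ex[OF V] by (auto simp: P_def)
        then have rl: "r \<le> l" unfolding r_def using dim_subset assms(5) by metis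
        have "N \<subseteq> Vp" by (auto simp: N_def)
        then have "t \<le> dim Vp" unfolding t_def by (rule dim_subset)
        then have tl: "t + l \<le> d" using dimVp by simp
        define j where "j = l - r"
        have jT: "j \<in> T" unfolding T_def j_def using rl tl dL rt assms(7) by (simp add: d_def) linarith
        have ij: "i - j = d - l - t" unfolding j_def using rl tl dL rt by linarith
        define a where "a = covering_minimum V (P ` K) (P ` \<Lambda>) j"
        define b where "b = covering_minimum Vp (K \<inter> Vp) (\<Lambda> \<inter> Vp) (i - j)"
        have ab: "a + b \<le> ereal m" using fle[OF jT] Mm by (simp add: f_def a_def b_def P_def Vp_def)
        have a0: "0 \<le> a" "0 \<le> b" unfolding a_def b_def by (simp_all add: cm_nonneg)
        obtain a' b' where ab': "a = ereal a'" "b = ereal b'" "a' + b' \<le> m" "0 \<le> a'" "0 \<le> b'"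
          using ab a0 by (cases a; cases b) auto
        define \<alpha> where "\<alpha> = a' + e/2"
        define \<beta> where "\<beta> = b' + e/2"
        have al: "a < ereal \<alpha>" "b < ereal \<beta>" using ab' e by (simp_all add: \<alpha>_def \<beta>_def)
        have PUaff: "affine (P ` U)"
          unfolding affine_def
        proof (intro ballI allI impI)
          fix x y and p q :: real assume xy: "x \<in> P ` U" "y \<in> P ` U" "p + q = 1"
          then obtain x' y' where "x' \<in> U" "y' \<in> U" "x = P x'" "y = P y'" by auto
          then have "p *\<^sub>R x' + q *\<^sub>R y' \<in> U" using U(1) xy(3) by (simp add: affine_def)
          moreover have "P (p *\<^sub>R x' + q *\<^sub>R y') = p *\<^sub>R x + q *\<^sub>R y"
            using linP \<open>x = P x'\<close> \<open>y = P y'\<close> by (simp add: linear_add linear_scale)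
          ultimately show "p *\<^sub>R x + q *\<^sub>R y \<in> P ` U" by (metis image_eqI)
        qed
        have PUsub: "P ` U \<subseteq> V" using op_ex[OF V] by (auto simp: P_def)
        have "(\<lambda>x. x - P u) ` (P ` U) = P ` L"
          unfolding L_def image_image using linP by (simp add: linear_diff)
        moreover have "aff_dim (P ` U) = int (dim ((\<lambda>x. x - P u) ` (P ` U)))"
          by (rule aff_dim_eq_dim_subtract) (simp add: u hull_inc)
        ultimately have "aff_dim (P ` U) = int r" by (simp add: r_def)
        then have PUdim: "aff_dim (P ` U) = int (dim V) - int j"
          using rl assms(5) by (simp add: j_def)
        have cPK: "convex (P ` K)" using linP cK by (rule convex_linear_image)
        have "0 = P 0" using linP by (simp add: linear_0)
        then have P0: "0 \<in> P ` K" "0 \<in> P ` \<Lambda>" using assms(2) Lat(1) by auto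
        obtain c1' g1' where c1: "c1' \<in> P ` K" "g1' \<in> P ` \<Lambda>" "\<alpha> *\<^sub>R c1' + g1' \<in> P ` U"
          using cm_use[OF V cPK P0(1) P0(2) _ PUaff _ PUsub PUdim] al(1) U(2)
          unfolding a_def by blast
        then obtain c1 g1 u1 where c1x: "c1 \<in> K" "g1 \<in> \<Lambda>" "u1 \<in> U"
          "\<alpha> *\<^sub>R P c1 + P g1 = P u1" by auto
        define z where "z = \<alpha> *\<^sub>R c1 + g1"
        have "P z = P u1" using c1x(4) linP by (simp add: z_def linear_add linear_scale)
        then have "P (u1 - z) = 0" using linP by (simp add: linear_diff)
        then have wVp: "u1 - z \<in> Vp" using op_zero_iff[OF V] by (simp add: P_def Vp_def)
        define U2 where "U2 = ((\<lambda>x. x - z) ` U) \<inter> Vp"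
        have U2aff: "affine U2" unfolding U2_def
        proof (rule affine_Int)
          have "(\<lambda>x. x - z) ` U = (+) (- z) ` U" by auto
          then show "affine ((\<lambda>x. x - z) ` U)" using U(1) affine_translation by metis
          show "affine Vp" using sVp by (rule subspace_imp_affine)
        qed
        have wU2: "u1 - z \<in> U2" using wVp c1x(3) by (auto simp: U2_def)
        have U2sub: "U2 \<subseteq> Vp" by (auto simp: U2_def)
        have eqL: "(\<lambda>x. x - (u1 - z)) ` U2 = ((\<lambda>x. x - u1) ` U) \<inter> Vp"
        proof
          show "(\<lambda>x. x - (u1 - z)) ` U2 \<subseteq> ((\<lambda>x. x - u1) ` U) \<inter> Vp"
          proof
            fix y assume "y \<in> (\<lambda>x. x - (u1 - z)) ` U2"
            then obtain x where x: "x \<in> U" "x - z \<in> Vp" "y = (x - z) - (u1 - z)"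
              by (auto simp: U2_def)
            have "y \<in> Vp" using x wVp sVp subspace_diff by metis
            moreover have "y = x - u1" using x by simp
            ultimately show "y \<in> ((\<lambda>x. x - u1) ` U) \<inter> Vp" using x(1) by blast
          qed
          show "((\<lambda>x. x - u1) ` U) \<inter> Vp \<subseteq> (\<lambda>x. x - (u1 - z)) ` U2"
          proof
            fix y assume "y \<in> ((\<lambda>x. x - u1) ` U) \<inter> Vp"
            then obtain x where x: "x \<in> U" "y = x - u1" "y \<in> Vp" by auto
            have "y + (u1 - z) \<in> Vp" using x(3) wVp sVp subspace_add by blast
            moreover have "y + (u1 - z) = x - z" using x by simp
            ultimately have "x - z \<in> U2" using x(1) by (auto simp: U2_def)
            moreover have "y = (x - z) - (u1 - z)" using x by simp
            ultimately show "y \<in> (\<lambda>x. x - (u1 - z)) ` U2" by blast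
          qed
        qed
        have "(\<lambda>x. x - u1) ` U = L" unfolding L_def by (rule affine_diff_indep[OF U(1) c1x(3) u])
        then have eqN: "(\<lambda>x. x - (u1 - z)) ` U2 = N" using eqL by (simp add: N_def)
        have "aff_dim U2 = int (dim ((\<lambda>x. x - (u1 - z)) ` U2))"
          by (rule aff_dim_eq_dim_subtract) (simp add: wU2 hull_inc)
        then have U2dim: "aff_dim U2 = int (dim Vp) - int (i - j)"
          using eqN ij dimVp tl by (simp add: t_def)
        have cKV: "convex (K \<inter> Vp)" using cK sVp by (simp add: convex_Int subspace_imp_convex)
        have z0: "0 \<in> K \<inter> Vp" "0 \<in> \<Lambda> \<inter> Vp" using assms(2) Lat(1) sVp subspace_0 by auto
        obtain c2 g2 where c2: "c2 \<in> K \<inter> Vp" "g2 \<in> \<Lambda> \<inter> Vp" "\<beta> *\<^sub>R c2 + g2 \<in> U2"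
          using cm_use[OF sVp cKV z0(1) z0(2) _ U2aff _ U2sub U2dim] al(2) wU2
          unfolding b_def by blast
        have inU: "z + (\<beta> *\<^sub>R c2 + g2) \<in> U" using c2(3) by (auto simp: U2_def)
        have pos: "0 < \<alpha>" "0 < \<beta>" using ab' e by (simp_all add: \<alpha>_def \<beta>_def)
        define c where "c = (\<alpha> / (\<alpha> + \<beta>)) *\<^sub>R c1 + (\<beta> / (\<alpha> + \<beta>)) *\<^sub>R c2"
        have cK': "c \<in> K" unfolding c_def
          by (rule convexD[OF cK c1x(1)]) (use c2 pos in \<open>auto simp: add_divide_distrib[symmetric]\<close>)
        have ce: "(\<alpha> + \<beta>) *\<^sub>R c = \<alpha> *\<^sub>R c1 + \<beta> *\<^sub>R c2"
          using pos by (simp add: c_def scaleR_add_right)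
        have sle: "\<alpha> + \<beta> \<le> m + e" using ab' by (simp add: \<alpha>_def \<beta>_def)
        define c' where "c' = ((\<alpha> + \<beta>) / (m + e)) *\<^sub>R c"
        have c'K: "c' \<in> K" unfolding c'_def
          by (rule star_scale[OF cK assms(2) cK']) (use pos sle m0 e in auto)
        have "(m + e) *\<^sub>R c' = (\<alpha> + \<beta>) *\<^sub>R c" using m0 e by (simp add: c'_def)
        then have pt: "(m + e) *\<^sub>R c' + (g1 + g2) = z + (\<beta> *\<^sub>R c2 + g2)"
          using ce by (simp add: z_def algebra_simps)
        have gL: "g1 + g2 \<in> \<Lambda>" using Ladd c1x(2) c2(2) by blast
        have inU': "(m + e) *\<^sub>R c' + (g1 + g2) \<in> U" unfolding pt by (rule inU)
        have "(m + e) *\<^sub>R c' + (g1 + g2) \<in> {(m + e) *\<^sub>R c + g | c g. c \<in> K \<and> g \<in> \<Lambda>}"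
          using c'K gL by blast
        then show ?thesis using inU' by blast
      qed
      have allU: "\<forall>U. affine U \<and> U \<noteq> {} \<and> U \<subseteq> UNIV \<and> aff_dim U = int (dim (UNIV::'a set)) - int i \<longrightarrow>
                 {(m + e) *\<^sub>R c + g | c g. c \<in> K \<and> g \<in> \<Lambda>} \<inter> U \<noteq> {}"
      proof (intro allI impI)
        fix U :: "'a set" assume h: "affine U \<and> U \<noteq> {} \<and> U \<subseteq> UNIV \<and> aff_dim U = int (dim (UNIV::'a set)) - int i"
        show "{(m + e) *\<^sub>R c + g | c g. c \<in> K \<and> g \<in> \<Lambda>} \<inter> U \<noteq> {}"
        proof (rule key)
          show "affine U" "U \<noteq> {}" using h by blast+
          show "aff_dim U = int d - int i" using h by (simp add: d_def)
        qed
      qed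
      have me: "0 \<le> m + e" using m0 e by simp
      have i0: "i \<noteq> 0" using assms(6) by simp
      have "covering_minimum UNIV K \<Lambda> i \<le> ereal (m + e)"
        unfolding covering_minimum_def if_not_P[OF i0]
        apply (rule Inf_lower)
        apply (rule CollectI, rule exI[where x="m+e"])
        apply (intro conjI refl me allU)
        done
      then show "covering_minimum UNIV K \<Lambda> i \<le> M + ereal e" using Mm by simp
    qed
  qed
  then show ?thesis unfolding M_def f_def T_def .
qed

end
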